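(* Let $G$ be a finite group with identity $e$, $R[G]$ its real group algebra, $S=\{x\in R[G]: \sum_gx_g=1,\ x_g\ge0\ \forall g\}$, and let $r>1$ be an integer. For $x\in S$ let $S_r(x)$ be the set of all limits of all convergent subsequences of $(x^{r^n})_{n\in\mathbb N}$, and let $d\ge1$ and distinct $m_0,\dots,m_{d-1}\in\{0,\dots,m_x-1\}$ be the repeating part of the eventually periodic sequence $(r^n \bmod m_x)_{n\in\mathbb N}$. Then: (1) $S_r(x)=\{c_xx^{m_i}: 0\le i<d\}=\{x^{m_i}c_x: 0\le i<d\}$; in particular $|S_r(x)|=1$ if and only if $m_x$ divides $r^k(r-1)$ for some $k\in\mathbb N$. (2) $\lim_{n\to\infty}\frac1n\sum_{i=1}^n x^{r^i}=\frac1d\sum_{i=0}^{d-1}x^{m_i}c_x$.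
   Context: $\mathrm{Supp}(y)=\{g: y_g\ne0\}$, $\mathbb N=\{1,2,\dots\}$, Euclidean topology on $R[G]$. For $x\in S$: $n_x=\min\{k\in\mathbb N:(x^k)_e\ne0\}$; $G_x$ is the subgroup of $G$ generated by $\mathrm{Supp}(x^{n_x})$; $c_x=\frac1{|G_x|}\sum_{g\in G_x}g$; $m_x=\min\{k\in\mathbb N:\mathrm{Supp}(x^k)\subset G_x\}$. *)

theory Defs
  imports "HOL-Analysis.Analysis" "HOL-Algebra.Generated_Groups"
begin

text \<open>Elements of the real group algebra R[G] of a finite group G (HOL-Algebra structure)
are represented as functions carrier G -> real, extended by 0 outside the carrier.
The Euclidean topology on R[G] is the product topology on 'a => real (coordinatewise convergence).\<close>

definition galg :: "('a, 'b) monoid_scheme \<Rightarrow> ('a \<Rightarrow> real) set" where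
  "galg G = {x. \<forall>g. g \<notin> carrier G \<longrightarrow> x g = 0}"

definition gmult :: "('a, 'b) monoid_scheme \<Rightarrow> ('a \<Rightarrow> real) \<Rightarrow> ('a \<Rightarrow> real) \<Rightarrow> ('a \<Rightarrow> real)" where
  "gmult G x y = (\<lambda>g. if g \<in> carrier G
      then (\<Sum>h\<in>carrier G. x h * y (inv\<^bsub>G\<^esub> h \<otimes>\<^bsub>G\<^esub> g)) else 0)"

definition gunit :: "('a, 'b) monoid_scheme \<Rightarrow> ('a \<Rightarrow> real)" where
  "gunit G = (\<lambda>g. if g = \<one>\<^bsub>G\<^esub> then 1 else 0)"

primrec gpow :: "('a, 'b) monoid_scheme \<Rightarrow> ('a \<Rightarrow> real) \<Rightarrow> nat \<Rightarrow> ('a \<Rightarrow> real)" where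
  "gpow G x 0 = gunit G"
| "gpow G x (Suc n) = gmult G (gpow G x n) x"

definition prob_simplex :: "('a, 'b) monoid_scheme \<Rightarrow> ('a \<Rightarrow> real) set" where
  "prob_simplex G = {x \<in> galg G. (\<forall>g\<in>carrier G. x g \<ge> 0) \<and> (\<Sum>g\<in>carrier G. x g) = 1}"

definition supp :: "('a, 'b) monoid_scheme \<Rightarrow> ('a \<Rightarrow> real) \<Rightarrow> 'a set" where
  "supp G y = {g \<in> carrier G. y g \<noteq> 0}"

definition n_of :: "('a, 'b) monoid_scheme \<Rightarrow> ('a \<Rightarrow> real) \<Rightarrow> nat" where
  "n_of G x = (LEAST k. k \<ge> 1 \<and> gpow G x k \<one>\<^bsub>G\<^esub> \<noteq> 0)"

definition G_of :: "('a, 'b) monoid_scheme \<Rightarrow> ('a \<Rightarrow> real) \<Rightarrow> 'a set" where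
  "G_of G x = generate G (supp G (gpow G x (n_of G x)))"

definition c_of :: "('a, 'b) monoid_scheme \<Rightarrow> ('a \<Rightarrow> real) \<Rightarrow> ('a \<Rightarrow> real)" where
  "c_of G x = (\<lambda>g. if g \<in> G_of G x then 1 / real (card (G_of G x)) else 0)"

definition m_of :: "('a, 'b) monoid_scheme \<Rightarrow> ('a \<Rightarrow> real) \<Rightarrow> nat" where
  "m_of G x = (LEAST k. k \<ge> 1 \<and> supp G (gpow G x k) \<subseteq> G_of G x)"

definition S_lim :: "('a, 'b) monoid_scheme \<Rightarrow> nat \<Rightarrow> ('a \<Rightarrow> real) \<Rightarrow> ('a \<Rightarrow> real) set" where
  "S_lim G r x = {L. \<exists>\<sigma>::nat \<Rightarrow> nat. strict_mono \<sigma> \<and>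
      ((\<lambda>n. gpow G x (r ^ (\<sigma> n + 1))) \<longlonglongrightarrow> L)}"

end

theory Submission
  imports Defs "HOL-Algebra.Multiplicative_Group"
begin


definition l1 :: "('a, 'b) monoid_scheme \<Rightarrow> ('a \<Rightarrow> real) \<Rightarrow> real" where
  "l1 G f = (\<Sum>g\<in>carrier G. \<bar>f g\<bar>)"

definition cs :: "('a, 'b) monoid_scheme \<Rightarrow> 'a set \<Rightarrow> ('a \<Rightarrow> real)" where
  "cs G K = (\<lambda>g. if g \<in> K then 1 / real (card K) else 0)"

definition van :: "'a set \<Rightarrow> ('a \<Rightarrow> real) \<Rightarrow> bool" where
  "van K f \<longleftrightarrow> (\<forall>g. g \<notin> K \<longrightarrow> f g = 0)"

lemma tendsto_fun_pointwise:
  fixes f :: "nat \<Rightarrow> 'a \<Rightarrow> real"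
  assumes "\<And>i. ((\<lambda>n. f n i) \<longlonglongrightarrow> l i)"
  shows "f \<longlonglongrightarrow> l"
proof -
  have "limitin (product_topology (\<lambda>i. euclidean) UNIV) f l sequentially"
    using assms by (subst limitin_componentwise) auto
  then show ?thesis by (simp add: euclidean_product_topology)
qed

lemma tendsto_fun_pointwiseD:
  fixes f :: "nat \<Rightarrow> 'a \<Rightarrow> real"
  assumes "f \<longlonglongrightarrow> l"
  shows "((\<lambda>n. f n i) \<longlonglongrightarrow> l i)"
proof -
  have "limitin (product_topology (\<lambda>i. euclidean) UNIV) f l sequentially"
    using assms by (simp add: euclidean_product_topology)
  then show ?thesis by (subst (asm) limitin_componentwise) auto
qed

lemma cesaro0:
  fixes u :: "nat \<Rightarrow> real"
  assumes u: "u \<longlonglongrightarrow> 0"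
  shows "(\<lambda>n. (\<Sum>i=1..n. u i) / real n) \<longlonglongrightarrow> 0"
proof (rule LIMSEQ_I)
  fix \<epsilon> :: real assume e: "0 < \<epsilon>"
  obtain N where N: "\<And>n. n \<ge> N \<Longrightarrow> norm (u n - 0) < \<epsilon> / 2"
    using LIMSEQ_D[OF u, of "\<epsilon> / 2"] e by auto
  define C where "C = (\<Sum>i=1..N. \<bar>u i\<bar>)"
  obtain N2 :: nat where N2: "C < real N2 * (\<epsilon> / 2)"
    using ex_less_of_nat_mult[of "\<epsilon> / 2" C] e by auto
  show "\<exists>no. \<forall>n\<ge>no. norm ((\<Sum>i=1..n. u i) / real n - 0) < \<epsilon>"
  proof (intro exI allI impI)
    fix n assume n: "n \<ge> max (max N N2) 1"
    then have n1: "n \<ge> 1" and nN: "n \<ge> N" and nN2: "n \<ge> N2" by auto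
    have "\<bar>\<Sum>i=1..n. u i\<bar> \<le> (\<Sum>i=1..n. \<bar>u i\<bar>)" by (rule sum_abs)
    also have "\<dots> \<le> (\<Sum>i=1..n. (if i \<le> N then \<bar>u i\<bar> else 0) + \<epsilon> / 2)"
    proof (rule sum_mono)
      fix i assume "i \<in> {1..n}"
      show "\<bar>u i\<bar> \<le> (if i \<le> N then \<bar>u i\<bar> else 0) + \<epsilon> / 2"
        using N[of i] e by (cases "i \<le> N") auto
    qed
    also have "\<dots> = (\<Sum>i=1..n. (if i \<in> {..N} then \<bar>u i\<bar> else 0)) + real n * (\<epsilon> / 2)"
      by (simp add: sum.distrib)
    also have "(\<Sum>i=1..n. (if i \<in> {..N} then \<bar>u i\<bar> else 0)) = (\<Sum>i\<in>{1..n} \<inter> {..N}. \<bar>u i\<bar>)"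
      by (rule sum.inter_restrict[symmetric]) simp
    also have "{1..n} \<inter> {..N} = {1..N}" using nN by auto
    also have "(\<Sum>i\<in>{1..N}. \<bar>u i\<bar>) = C" by (simp add: C_def)
    finally have "\<bar>\<Sum>i=1..n. u i\<bar> \<le> C + real n * (\<epsilon> / 2)" .
    also have "\<dots> < real n * (\<epsilon> / 2) + real n * (\<epsilon> / 2)"
    proof -
      have "real N2 * (\<epsilon> / 2) \<le> real n * (\<epsilon> / 2)"
        by (rule mult_right_mono) (use nN2 e in auto)
      then show ?thesis using N2 by linarith
    qed
    also have "\<dots> = real n * \<epsilon>" by simp
    finally have "\<bar>\<Sum>i=1..n. u i\<bar> < real n * \<epsilon>" .
    then show "norm ((\<Sum>i=1..n. u i) / real n - 0) < \<epsilon>"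
    proof -
      have np: "0 < real n" using n1 by simp
      have "norm ((\<Sum>i=1..n. u i) / real n - 0) = \<bar>\<Sum>i=1..n. u i\<bar> / real n"
        using np by (simp only: diff_zero real_norm_def abs_divide abs_of_pos[OF np])
      also have "\<dots> < \<epsilon>" using np \<open>\<bar>\<Sum>i=1..n. u i\<bar> < real n * \<epsilon>\<close>
        by (simp add: pos_divide_less_eq algebra_simps)
      finally show ?thesis .
    qed
  qed
qed

lemma cesaro:
  fixes s :: "nat \<Rightarrow> real"
  assumes s: "s \<longlonglongrightarrow> l"
  shows "(\<lambda>n. (\<Sum>i=1..n. s i) / real n) \<longlonglongrightarrow> l"
proof -
  have u: "(\<lambda>i. s i - l) \<longlonglongrightarrow> 0" using s by (rule LIM_zero)
  have c0: "(\<lambda>n. (\<Sum>i=1..n. s i - l) / real n) \<longlonglongrightarrow> 0" by (rule cesaro0[OF u])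
  have ev: "eventually (\<lambda>n. (\<Sum>i=1..n. s i - l) / real n = (\<Sum>i=1..n. s i) / real n - l) sequentially"
  proof (rule eventually_sequentiallyI[of 1])
    fix n :: nat assume "1 \<le> n"
    then show "(\<Sum>i=1..n. s i - l) / real n = (\<Sum>i=1..n. s i) / real n - l"
      by (simp add: sum_subtractf diff_divide_distrib)
  qed
  have "(\<lambda>n. (\<Sum>i=1..n. s i) / real n - l) \<longlonglongrightarrow> 0"
    using tendsto_cong[OF ev] c0 by simp
  then show ?thesis by (rule LIM_zero_cancel)
qed

lemma shift_diff_bound:
  fixes a :: "nat \<Rightarrow> real"
  assumes a: "\<And>i. \<bar>a i\<bar> \<le> 1"
  shows "\<bar>(\<Sum>i=1..n. a (i + t)) - (\<Sum>i=1..n. a i)\<bar> \<le> 2 * real t"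
proof (induction t)
  case 0 then show ?case by simp
next
  case (Suc t)
  have tel: "(\<Sum>i=1..n. a (Suc i + t) - a (i + t)) = a (Suc n + t) - a (1 + t)"
    by (rule sum_Suc_diff[where f="\<lambda>i. a (i + t)", of 1 n]) simp
  have "(\<Sum>i=1..n. a (i + Suc t)) - (\<Sum>i=1..n. a i)
      = ((\<Sum>i=1..n. a (i + t)) - (\<Sum>i=1..n. a i)) + (a (Suc n + t) - a (1 + t))"
    using tel by (simp add: sum_subtractf)
  moreover have "\<bar>a (Suc n + t) - a (1 + t)\<bar> \<le> 2"
    using a[of "Suc n + t"] a[of "1 + t"] by linarith
  ultimately show ?case using Suc by simp
qed

lemma window_bnd:
  fixes a :: "nat \<Rightarrow> real"
  assumes a: "\<And>i. \<bar>a i\<bar> \<le> 1" and d: "d \<ge> 1"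
  shows "\<bar>(\<Sum>i=1..n. a i) - (\<Sum>i=1..n. (\<Sum>t<d. a (i + t)) / real d)\<bar> \<le> 2 * real d"
proof -
  have dpos: "0 < real d" and dnz: "real d \<noteq> 0" using d by auto
  define SA where "SA = (\<Sum>i=1..n. a i)"
  define SS where "SS t = (\<Sum>i=1..n. a (i + t))" for t
  have ST: "(\<Sum>i=1..n. (\<Sum>t<d. a (i + t)) / real d) = (\<Sum>t<d. SS t) / real d"
  proof -
    have "(\<Sum>i=1..n. (\<Sum>t<d. a (i + t)) / real d) = (\<Sum>i=1..n. \<Sum>t<d. a (i + t)) / real d"
      by (rule sum_divide_distrib[symmetric])
    also have "(\<Sum>i=1..n. \<Sum>t<d. a (i + t)) = (\<Sum>t<d. SS t)" unfolding SS_def by (rule sum.swap)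
    finally show ?thesis .
  qed
  have eq: "SA - (\<Sum>t<d. SS t) / real d = (\<Sum>t<d. SA - SS t) / real d"
  proof -
    have "(\<Sum>t<d. SA - SS t) = real d * SA - (\<Sum>t<d. SS t)" by (simp add: sum_subtractf)
    then show ?thesis using dnz by (simp add: diff_divide_distrib)
  qed
  have "\<bar>\<Sum>t<d. SA - SS t\<bar> \<le> (\<Sum>t<d. \<bar>SA - SS t\<bar>)" by (rule sum_abs)
  also have "\<dots> \<le> (\<Sum>t<d. 2 * real d)"
  proof (rule sum_mono)
    fix t assume t: "t \<in> {..<d}"
    have "\<bar>SA - SS t\<bar> \<le> 2 * real t"
      using shift_diff_bound[where a=a and n=n and t=t, OF a] unfolding SA_def SS_def by linarith
    also have "\<dots> \<le> 2 * real d" using t by simp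
    finally show "\<bar>SA - SS t\<bar> \<le> 2 * real d" .
  qed
  also have "\<dots> = real d * (2 * real d)" by simp
  finally have b: "\<bar>\<Sum>t<d. SA - SS t\<bar> \<le> real d * (2 * real d)" .
  have "\<bar>SA - (\<Sum>t<d. SS t) / real d\<bar> = \<bar>\<Sum>t<d. SA - SS t\<bar> / real d"
    unfolding eq using dpos by (simp add: abs_divide)
  also have "\<dots> \<le> real d * (2 * real d) / real d" by (rule divide_right_mono[OF b]) (use dpos in simp)
  also have "\<dots> = 2 * real d" using dnz by simp
  finally show ?thesis unfolding ST SA_def .
qed

lemma window_cesaro:
  fixes a :: "nat \<Rightarrow> real"
  assumes a: "\<And>i. \<bar>a i\<bar> \<le> 1" and d: "d \<ge> 1"
    and w: "(\<lambda>i. (\<Sum>t<d. a (i + t)) / real d) \<longlonglongrightarrow> l"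
  shows "(\<lambda>n. (\<Sum>i=1..n. a i) / real n) \<longlonglongrightarrow> l"
proof -
  define T where "T i = (\<Sum>t<d. a (i + t)) / real d" for i
  have cT: "(\<lambda>n. (\<Sum>i=1..n. T i) / real n) \<longlonglongrightarrow> l" using cesaro[OF w] by (simp add: T_def)
  have bnd: "\<bar>(\<Sum>i=1..n. a i) - (\<Sum>i=1..n. T i)\<bar> \<le> 2 * real d" for n
    unfolding T_def by (rule window_bnd[OF a d])
  have "(\<lambda>n. ((\<Sum>i=1..n. a i) / real n) - ((\<Sum>i=1..n. T i) / real n)) \<longlonglongrightarrow> 0"
  proof (rule Lim_null_comparison)
    show "eventually (\<lambda>n. norm ((\<Sum>i=1..n. a i) / real n - (\<Sum>i=1..n. T i) / real n) \<le> 2 * real d / real n) sequentially"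
    proof (rule eventually_sequentiallyI[of 1])
      fix n :: nat assume n: "1 \<le> n"
      define A where "A = (\<Sum>i=1..n. a i)"
      define B where "B = (\<Sum>i=1..n. T i)"
      have np: "0 < real n" using n by simp
      have "norm (A / real n - B / real n) = \<bar>A - B\<bar> / real n"
        using np by (simp add: diff_divide_distrib[symmetric] abs_divide)
      also have "\<dots> \<le> 2 * real d / real n"
        by (rule divide_right_mono) (use bnd[of n] np in \<open>simp_all add: A_def B_def\<close>)
      finally show "norm ((\<Sum>i=1..n. a i) / real n - (\<Sum>i=1..n. T i) / real n) \<le> 2 * real d / real n"
        by (simp only: A_def B_def)
    qed
    show "(\<lambda>n. 2 * real d / real n) \<longlonglongrightarrow> 0"
      by (rule lim_const_over_n)
  qed
  from tendsto_add[OF this cT] show ?thesis by simp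
qed

lemma rotate_sum:
  fixes f :: "nat \<Rightarrow> 'b::comm_monoid_add"
  assumes d: "0 < d"
  shows "(\<Sum>t<d. f ((c + t) mod d)) = (\<Sum>j<d. f j)"
proof -
  have inj: "inj_on (\<lambda>t. (c + t) mod d) {..<d}"
  proof (rule inj_onI)
    fix s t assume s: "s \<in> {..<d}" and t: "t \<in> {..<d}" and eq: "(c + s) mod d = (c + t) mod d"
    from eq have "s mod d = t mod d" by (simp add: nat_mod_eq_iff)
    then show "s = t" using s t by simp
  qed
  have img: "(\<lambda>t. (c + t) mod d) ` {..<d} = {..<d}"
    by (rule endo_inj_surj[OF finite_lessThan _ inj]) (use d in auto)
  have "(\<Sum>j<d. f j) = (\<Sum>j\<in>(\<lambda>t. (c + t) mod d) ` {..<d}. f j)" by (simp only: img)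
  also have "\<dots> = (\<Sum>t<d. f ((c + t) mod d))" by (simp add: sum.reindex[OF inj])
  finally show ?thesis by simp
qed

lemma finite_limit:
  fixes Q :: "nat \<Rightarrow> 'a \<Rightarrow> real"
  assumes conv: "\<And>g. (\<lambda>k. Q k g) \<longlonglongrightarrow> L g"
    and ev: "eventually (\<lambda>k. Q k \<in> S) sequentially" and fin: "finite S"
  shows "L \<in> S"
proof (rule ccontr)
  assume nS: "L \<notin> S"
  have ex: "\<forall>s\<in>S. \<exists>g. s g \<noteq> L g"
  proof
    fix s assume "s \<in> S"
    then have "s \<noteq> L" using nS by auto
    then show "\<exists>g. s g \<noteq> L g" by (auto simp: fun_eq_iff)
  qed
  obtain gs where gs0: "\<forall>s\<in>S. s (gs s) \<noteq> L (gs s)" using bchoice[OF ex] by blast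
  then have gs: "\<And>s. s \<in> S \<Longrightarrow> s (gs s) \<noteq> L (gs s)" by blast
  have "eventually (\<lambda>k. \<forall>s\<in>S. dist (Q k (gs s)) (L (gs s)) < \<bar>s (gs s) - L (gs s)\<bar>) sequentially"
    using fin by (rule eventually_ball_finite) (use conv gs in \<open>auto intro: tendstoD\<close>)
  with ev have "eventually (\<lambda>k. Q k \<in> S \<and> (\<forall>s\<in>S. dist (Q k (gs s)) (L (gs s)) < \<bar>s (gs s) - L (gs s)\<bar>)) sequentially"
    by (rule eventually_conj)
  then obtain N where N: "\<forall>n\<ge>N. Q n \<in> S \<and> (\<forall>s\<in>S. dist (Q n (gs s)) (L (gs s)) < \<bar>s (gs s) - L (gs s)\<bar>)"
    unfolding eventually_sequentially by blast
  then have k: "Q N \<in> S" "\<forall>s\<in>S. dist (Q N (gs s)) (L (gs s)) < \<bar>s (gs s) - L (gs s)\<bar>" by auto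
  from k(2)[rule_format, OF k(1)] show False by (simp add: dist_real_def)
qed

lemma pow_filterlim:
  assumes "1 < (r::nat)"
  shows "filterlim (\<lambda>n. r ^ n) sequentially sequentially"
  by (rule filterlim_subseq) (use assms in \<open>auto intro!: strict_monoI power_strict_increasing\<close>)


locale fgrp = group G for G (structure) + assumes fin: "finite (carrier G)"
begin

lemma sum_reindex_l:
  assumes "k \<in> carrier G"
  shows "(\<Sum>h\<in>carrier G. f h) = (\<Sum>l\<in>carrier G. f (k \<otimes> l))"
  by (rule sum.reindex_bij_witness[where j="\<lambda>h. inv k \<otimes> h" and i="\<lambda>l. k \<otimes> l"])
     (use assms in \<open>auto simp: m_assoc[symmetric]\<close>)

lemma sum_reindex_invr:
  assumes "g \<in> carrier G"
  shows "(\<Sum>h\<in>carrier G. f (inv h \<otimes> g)) = (\<Sum>l\<in>carrier G. f l)"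
  by (rule sum.reindex_bij_witness[where i="\<lambda>l. g \<otimes> inv l" and j="\<lambda>h. inv h \<otimes> g"])
     (use assms in \<open>auto simp: inv_mult_group m_assoc[symmetric], simp add: m_assoc\<close>)

lemma gmult_apply: "g \<in> carrier G \<Longrightarrow> gmult G u v g = (\<Sum>h\<in>carrier G. u h * v (inv h \<otimes> g))"
  by (simp add: gmult_def)

lemma gmult_out: "g \<notin> carrier G \<Longrightarrow> gmult G u v g = 0"
  by (simp add: gmult_def)

lemma gmult_galg: "gmult G u v \<in> galg G"
  by (simp add: galg_def gmult_def)

lemma gunit_galg: "gunit G \<in> galg G"
  by (auto simp: galg_def gunit_def)

lemma gpow_galg: "x \<in> galg G \<Longrightarrow> gpow G x n \<in> galg G"
  by (cases n) (auto simp: gunit_galg gmult_galg)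

lemma galg_out: "u \<in> galg G \<Longrightarrow> g \<notin> carrier G \<Longrightarrow> u g = 0"
  by (simp add: galg_def)

lemma gmult_assoc: "gmult G (gmult G u v) w = gmult G u (gmult G v w)"
proof (rule ext)
  fix g
  show "gmult G (gmult G u v) w g = gmult G u (gmult G v w) g"
  proof (cases "g \<in> carrier G")
    case False then show ?thesis by (simp add: gmult_out)
  next
    case g: True
    have "gmult G (gmult G u v) w g
        = (\<Sum>h\<in>carrier G. (\<Sum>k\<in>carrier G. u k * v (inv k \<otimes> h)) * w (inv h \<otimes> g))"
      by (simp add: gmult_apply g)
    also have "\<dots> = (\<Sum>h\<in>carrier G. \<Sum>k\<in>carrier G. u k * (v (inv k \<otimes> h) * w (inv h \<otimes> g)))"
      by (simp add: sum_distrib_right mult.assoc)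
    also have "\<dots> = (\<Sum>k\<in>carrier G. \<Sum>h\<in>carrier G. u k * (v (inv k \<otimes> h) * w (inv h \<otimes> g)))"
      by (rule sum.swap)
    also have "\<dots> = (\<Sum>k\<in>carrier G. u k * (\<Sum>h\<in>carrier G. v (inv k \<otimes> h) * w (inv h \<otimes> g)))"
      by (simp add: sum_distrib_left)
    also have "\<dots> = (\<Sum>k\<in>carrier G. u k * (\<Sum>l\<in>carrier G. v l * w (inv l \<otimes> (inv k \<otimes> g))))"
    proof (rule sum.cong[OF refl])
      fix k assume k: "k \<in> carrier G"
      have "(\<Sum>h\<in>carrier G. v (inv k \<otimes> h) * w (inv h \<otimes> g))
          = (\<Sum>l\<in>carrier G. v (inv k \<otimes> (k \<otimes> l)) * w (inv (k \<otimes> l) \<otimes> g))"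
        by (rule sum_reindex_l[OF k])
      also have "\<dots> = (\<Sum>l\<in>carrier G. v l * w (inv l \<otimes> (inv k \<otimes> g)))"
        by (rule sum.cong[OF refl]) (use k g in \<open>simp add: m_assoc[symmetric] inv_mult_group\<close>)
      finally show "u k * (\<Sum>h\<in>carrier G. v (inv k \<otimes> h) * w (inv h \<otimes> g))
          = u k * (\<Sum>l\<in>carrier G. v l * w (inv l \<otimes> (inv k \<otimes> g)))" by simp
    qed
    also have "\<dots> = gmult G u (gmult G v w) g"
      by (simp add: gmult_apply g)
    finally show ?thesis .
  qed
qed

lemma gunit_left: "u \<in> galg G \<Longrightarrow> gmult G (gunit G) u = u"
proof (rule ext)
  fix g assume u: "u \<in> galg G"
  show "gmult G (gunit G) u g = u g"
  proof (cases "g \<in> carrier G")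
    case False then show ?thesis using u by (simp add: gmult_out galg_out)
  next
    case True
    have "gmult G (gunit G) u g = (\<Sum>h\<in>carrier G. (if h = \<one> then u (inv h \<otimes> g) else 0))"
      unfolding gmult_apply[OF True] by (rule sum.cong[OF refl]) (simp add: gunit_def)
    also have "\<dots> = u g" using True by (simp add: sum.delta fin)
    finally show ?thesis .
  qed
qed

lemma gunit_right: "u \<in> galg G \<Longrightarrow> gmult G u (gunit G) = u"
proof (rule ext)
  fix g assume u: "u \<in> galg G"
  show "gmult G u (gunit G) g = u g"
  proof (cases "g \<in> carrier G")
    case False then show ?thesis using u by (simp add: gmult_out galg_out)
  next
    case True
    have "gmult G u (gunit G) g = (\<Sum>h\<in>carrier G. (if h = g then u h else 0))"
      unfolding gmult_apply[OF True]
    proof (rule sum.cong[OF refl])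
      fix h assume h: "h \<in> carrier G"
      have "(inv h \<otimes> g = \<one>) = (h = g)"
        using h True group.inv_solve_left' is_group by fastforce
      then show "u h * gunit G (inv h \<otimes> g) = (if h = g then u h else 0)"
        by (simp add: gunit_def)
    qed
    also have "\<dots> = u g" using True by (simp add: sum.delta' fin)
    finally show ?thesis .
  qed
qed

lemma gpow_add: "x \<in> galg G \<Longrightarrow> gpow G x (a + b) = gmult G (gpow G x a) (gpow G x b)"
  by (induction b) (simp_all add: gunit_right gpow_galg gmult_assoc)

lemma gpow_one: "x \<in> galg G \<Longrightarrow> gpow G x 1 = x"
  by (simp add: gunit_left)

lemma gpow_Suc':
  assumes "x \<in> galg G" shows "gpow G x (Suc n) = gmult G x (gpow G x n)"
proof -
  have "gpow G x (Suc n) = gpow G x (1 + n)" by simp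
  also have "\<dots> = gmult G (gpow G x 1) (gpow G x n)" by (rule gpow_add[OF assms])
  also have "\<dots> = gmult G x (gpow G x n)" by (simp only: gpow_one[OF assms])
  finally show ?thesis .
qed

lemma gpow_mult: "x \<in> galg G \<Longrightarrow> gpow G x (a * b) = gpow G (gpow G x a) b"
proof (induction b)
  case 0 then show ?case by simp
next
  case (Suc b)
  have "gpow G x (a * Suc b) = gpow G x (a * b + a)" by (simp only: mult_Suc_right add.commute)
  also have "\<dots> = gmult G (gpow G x (a*b)) (gpow G x a)" by (rule gpow_add[OF Suc.prems])
  also have "\<dots> = gmult G (gpow G (gpow G x a) b) (gpow G x a)" by (simp only: Suc.IH[OF Suc.prems])
  also have "\<dots> = gpow G (gpow G x a) (Suc b)" by (simp only: gpow.simps)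
  finally show ?case .
qed


lemma sum_shift:
  assumes "h \<in> carrier G"
  shows "(\<Sum>g\<in>carrier G. v (inv h \<otimes> g)) = (\<Sum>g\<in>carrier G. v g)"
proof -
  have "(\<Sum>g\<in>carrier G. v (inv h \<otimes> g)) = (\<Sum>l\<in>carrier G. v (inv h \<otimes> (h \<otimes> l)))"
    by (rule sum_reindex_l[OF assms])
  also have "\<dots> = (\<Sum>g\<in>carrier G. v g)"
    by (rule sum.cong[OF refl]) (use assms in \<open>simp add: m_assoc[symmetric]\<close>)
  finally show ?thesis .
qed

lemma prob_nonneg: "x \<in> prob_simplex G \<Longrightarrow> 0 \<le> x g"
  by (cases "g \<in> carrier G") (auto simp: prob_simplex_def galg_def)

lemma prob_sum: "x \<in> prob_simplex G \<Longrightarrow> (\<Sum>g\<in>carrier G. x g) = 1"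
  by (simp add: prob_simplex_def)

lemma prob_galg: "x \<in> prob_simplex G \<Longrightarrow> x \<in> galg G"
  by (simp add: prob_simplex_def)

lemma prob_intro: "u \<in> galg G \<Longrightarrow> (\<And>g. 0 \<le> u g) \<Longrightarrow> (\<Sum>g\<in>carrier G. u g) = 1 \<Longrightarrow> u \<in> prob_simplex G"
  by (simp add: prob_simplex_def)

lemma sum_gmult: "(\<Sum>g\<in>carrier G. gmult G u v g) = (\<Sum>h\<in>carrier G. u h) * (\<Sum>g\<in>carrier G. v g)"
proof -
  have "(\<Sum>g\<in>carrier G. gmult G u v g) = (\<Sum>g\<in>carrier G. \<Sum>h\<in>carrier G. u h * v (inv h \<otimes> g))"
    by (rule sum.cong[OF refl]) (simp add: gmult_apply)
  also have "\<dots> = (\<Sum>h\<in>carrier G. \<Sum>g\<in>carrier G. u h * v (inv h \<otimes> g))"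
    by (rule sum.swap)
  also have "\<dots> = (\<Sum>h\<in>carrier G. u h * (\<Sum>g\<in>carrier G. v g))"
    by (rule sum.cong[OF refl]) (simp add: sum_distrib_left[symmetric] sum_shift)
  also have "\<dots> = (\<Sum>h\<in>carrier G. u h) * (\<Sum>g\<in>carrier G. v g)"
    by (simp add: sum_distrib_right)
  finally show ?thesis .
qed

lemma gmult_nonneg: "(\<And>g. 0 \<le> u g) \<Longrightarrow> (\<And>g. 0 \<le> v g) \<Longrightarrow> 0 \<le> gmult G u v g"
  by (cases "g \<in> carrier G") (auto simp: gmult_apply gmult_out intro!: sum_nonneg)

lemma gmult_prob: "u \<in> prob_simplex G \<Longrightarrow> v \<in> prob_simplex G \<Longrightarrow> gmult G u v \<in> prob_simplex G"
proof (rule prob_intro[OF gmult_galg])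
  assume u: "u \<in> prob_simplex G" and v: "v \<in> prob_simplex G"
  show "0 \<le> gmult G u v g" for g by (rule gmult_nonneg) (auto intro: prob_nonneg u v)
  show "(\<Sum>g\<in>carrier G. gmult G u v g) = 1" by (simp add: sum_gmult prob_sum u v)
qed

lemma gunit_prob: "gunit G \<in> prob_simplex G"
  by (rule prob_intro[OF gunit_galg]) (auto simp: gunit_def sum.delta fin)

lemma gpow_prob: "x \<in> prob_simplex G \<Longrightarrow> gpow G x n \<in> prob_simplex G"
  by (induction n) (auto simp: gunit_prob gmult_prob)

lemma gmult_ge_term:
  assumes "\<And>g. 0 \<le> u g" "\<And>g. 0 \<le> v g" "g \<in> carrier G" "h \<in> carrier G"
  shows "u h * v (inv h \<otimes> g) \<le> gmult G u v g"
  unfolding gmult_apply[OF assms(3)]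
  by (rule member_le_sum[OF assms(4) _ fin]) (simp add: assms)

lemma l1_nonneg: "0 \<le> l1 G f"
  by (simp add: l1_def sum_nonneg)

lemma abs_le_l1: "g \<in> carrier G \<Longrightarrow> \<bar>f g\<bar> \<le> l1 G f"
  unfolding l1_def by (rule member_le_sum) (auto simp: fin)

lemma l1_gmult: "l1 G (gmult G u v) \<le> l1 G u * l1 G v"
proof -
  have "l1 G (gmult G u v) = (\<Sum>g\<in>carrier G. \<bar>\<Sum>h\<in>carrier G. u h * v (inv h \<otimes> g)\<bar>)"
    unfolding l1_def by (rule sum.cong[OF refl]) (simp add: gmult_apply)
  also have "\<dots> \<le> (\<Sum>g\<in>carrier G. \<Sum>h\<in>carrier G. \<bar>u h\<bar> * \<bar>v (inv h \<otimes> g)\<bar>)"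
    by (rule sum_mono) (metis (no_types, lifting) abs_mult sum.cong sum_abs)
  also have "\<dots> = (\<Sum>h\<in>carrier G. \<Sum>g\<in>carrier G. \<bar>u h\<bar> * \<bar>v (inv h \<otimes> g)\<bar>)"
    by (rule sum.swap)
  also have "\<dots> = (\<Sum>h\<in>carrier G. \<bar>u h\<bar> * l1 G v)"
    unfolding l1_def
    by (rule sum.cong[OF refl]) (simp add: sum_distrib_left[symmetric] sum_shift[where v="\<lambda>g. \<bar>v g\<bar>"])
  also have "\<dots> = l1 G u * l1 G v"
    by (simp add: l1_def sum_distrib_right)
  finally show ?thesis .
qed

lemma l1_prob: "x \<in> prob_simplex G \<Longrightarrow> l1 G x = 1"
  unfolding l1_def using prob_nonneg prob_sum by simp

lemma sg_iff:
  assumes "subgroup K G" "h \<in> K" "g \<in> carrier G"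
  shows "(inv h \<otimes> g \<in> K) = (g \<in> K)"
proof
  have h: "h \<in> carrier G" using assms subgroup.mem_carrier by metis
  assume "inv h \<otimes> g \<in> K"
  then have "h \<otimes> (inv h \<otimes> g) \<in> K" using assms subgroup.m_closed by metis
  then show "g \<in> K" using h assms(3) by (simp add: m_assoc[symmetric])
next
  assume "g \<in> K"
  then show "inv h \<otimes> g \<in> K" using assms
    by (metis m_inv_consistent subgroup.m_closed subgroup.m_inv_closed)
qed

lemma sg_iff2:
  assumes "subgroup K G" "g \<in> K" "h \<in> carrier G"
  shows "(inv h \<otimes> g \<in> K) = (h \<in> K)"
proof
  have g: "g \<in> carrier G" using assms subgroup.mem_carrier by metis
  assume a: "inv h \<otimes> g \<in> K"
  have "inv (inv h \<otimes> g) = inv g \<otimes> h" using g assms(3) by (simp add: inv_mult_group)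
  then have "inv g \<otimes> h \<in> K" using a assms(1)
    by (metis m_inv_consistent subgroup.m_inv_closed)
  then have "g \<otimes> (inv g \<otimes> h) \<in> K" using assms subgroup.m_closed by metis
  then show "h \<in> K" using g assms(3) by (simp add: m_assoc[symmetric])
next
  assume "h \<in> K"
  then show "inv h \<otimes> g \<in> K" using assms
    by (metis m_inv_consistent subgroup.m_closed subgroup.m_inv_closed)
qed

lemma sg_sub: "subgroup K G \<Longrightarrow> K \<subseteq> carrier G"
  by (rule subgroup.subset)

lemma sg_card: "subgroup K G \<Longrightarrow> 0 < card K"
  by (metis card_gt_0_iff empty_iff fin finite_subset subgroup.one_closed subgroup.subset)

lemma van_gmult:
  assumes "subgroup K G" "van K u" "van K v"
  shows "van K (gmult G u v)"
  unfolding van_def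
proof (intro allI impI)
  fix g assume gK: "g \<notin> K"
  show "gmult G u v g = 0"
  proof (cases "g \<in> carrier G")
    case False then show ?thesis by (simp add: gmult_out)
  next
    case True
    have z: "\<forall>h\<in>carrier G. u h * v (inv h \<otimes> g) = 0"
    proof
      fix h assume h: "h \<in> carrier G"
      show "u h * v (inv h \<otimes> g) = 0"
      proof (cases "h \<in> K")
        case True
        then have "inv h \<otimes> g \<notin> K" using sg_iff[OF assms(1) True \<open>g \<in> carrier G\<close>] gK by simp
        then show ?thesis using assms(3) by (simp add: van_def)
      next
        case False then show ?thesis using assms(2) by (simp add: van_def)
      qed
    qed
    show ?thesis unfolding gmult_apply[OF True] using sum.neutral[OF z] .
  qed
qed

lemma van_gpow: "subgroup K G \<Longrightarrow> van K y \<Longrightarrow> van K (gpow G y n)"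
proof (induction n)
  case 0 then show ?case by (auto simp: van_def gunit_def subgroup.one_closed)
next
  case (Suc n) then show ?case by (simp add: van_gmult)
qed

lemma van_cs: "van K (cs G K)"
  by (simp add: van_def cs_def)

lemma sum_cs: "subgroup K G \<Longrightarrow> (\<Sum>g\<in>carrier G. cs G K g) = 1"
proof -
  assume sg: "subgroup K G"
  have "(\<Sum>g\<in>carrier G. cs G K g) = (\<Sum>g\<in>carrier G \<inter> K. 1 / real (card K))"
    unfolding cs_def using sum.inter_restrict[OF fin, of "\<lambda>_. 1 / real (card K)" K] by simp
  also have "carrier G \<inter> K = K" using sg_sub[OF sg] by blast
  finally show ?thesis using sg_card[OF sg] by simp
qed

lemma cs_galg: "subgroup K G \<Longrightarrow> cs G K \<in> galg G"
  using sg_sub by (auto simp: galg_def cs_def)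

lemma cs_prob: "subgroup K G \<Longrightarrow> cs G K \<in> prob_simplex G"
proof (rule prob_intro[OF cs_galg])
  assume sg: "subgroup K G"
  show "0 \<le> cs G K g" for g by (simp add: cs_def)
  show "(\<Sum>g\<in>carrier G. cs G K g) = 1" by (rule sum_cs[OF sg])
qed

lemma cs_left:
  assumes sg: "subgroup K G" and f: "van K f"
  shows "gmult G (cs G K) f = (\<lambda>g. (\<Sum>h\<in>carrier G. f h) * cs G K g)"
proof (rule ext)
  fix g
  show "gmult G (cs G K) f g = (\<Sum>h\<in>carrier G. f h) * cs G K g"
  proof (cases "g \<in> carrier G")
    case False
    then have "g \<notin> K" using sg_sub[OF sg] by blast
    then show ?thesis using False by (simp add: gmult_out cs_def)
  next
    case gC: True
    show ?thesis
    proof (cases "g \<in> K")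
      case gK: True
      have "gmult G (cs G K) f g = (\<Sum>h\<in>carrier G. (1 / real (card K)) * f (inv h \<otimes> g))"
        unfolding gmult_apply[OF gC]
      proof (rule sum.cong[OF refl])
        fix h assume h: "h \<in> carrier G"
        show "cs G K h * f (inv h \<otimes> g) = 1 / real (card K) * f (inv h \<otimes> g)"
        proof (cases "h \<in> K")
          case False
          then have "inv h \<otimes> g \<notin> K" using sg_iff2[OF sg gK h] by simp
          then show ?thesis using f by (simp add: van_def)
        qed (simp add: cs_def)
      qed
      also have "\<dots> = (1 / real (card K)) * (\<Sum>h\<in>carrier G. f h)"
        by (simp add: sum_divide_distrib[symmetric] sum_reindex_invr[OF gC])
      finally show ?thesis using gK by (simp add: cs_def)
    next
      case gK: False
      have "gmult G (cs G K) f g = (\<Sum>h\<in>carrier G. 0)"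
        unfolding gmult_apply[OF gC]
      proof (rule sum.cong[OF refl])
        fix h assume h: "h \<in> carrier G"
        show "cs G K h * f (inv h \<otimes> g) = 0"
        proof (cases "h \<in> K")
          case True
          then have "inv h \<otimes> g \<notin> K" using sg_iff[OF sg True gC] gK by simp
          then show ?thesis using f by (simp add: van_def)
        qed (simp add: cs_def)
      qed
      then show ?thesis using gK by (simp add: cs_def)
    qed
  qed
qed

lemma cs_right:
  assumes sg: "subgroup K G" and f: "van K f"
  shows "gmult G f (cs G K) = (\<lambda>g. (\<Sum>h\<in>carrier G. f h) * cs G K g)"
proof (rule ext)
  fix g
  show "gmult G f (cs G K) g = (\<Sum>h\<in>carrier G. f h) * cs G K g"
  proof (cases "g \<in> carrier G")
    case False
    then have "g \<notin> K" using sg_sub[OF sg] by blast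
    then show ?thesis using False by (simp add: gmult_out cs_def)
  next
    case gC: True
    have "gmult G f (cs G K) g = (\<Sum>h\<in>carrier G. f h * cs G K g)"
      unfolding gmult_apply[OF gC]
    proof (rule sum.cong[OF refl])
      fix h assume h: "h \<in> carrier G"
      show "f h * cs G K (inv h \<otimes> g) = f h * cs G K g"
      proof (cases "h \<in> K")
        case True
        then show ?thesis using sg_iff[OF sg True gC] by (simp add: cs_def)
      next
        case False then show ?thesis using f by (simp add: van_def)
      qed
    qed
    then show ?thesis by (simp add: sum_distrib_right)
  qed
qed


lemma gmult_diff_left:
  "gmult G (\<lambda>g. u g - v g) w g = gmult G u w g - gmult G v w g"
  by (cases "g \<in> carrier G") (simp_all add: gmult_apply gmult_out sum_subtractf left_diff_distrib)

lemma gmult_diff_right: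
  "gmult G w (\<lambda>g. u g - v g) g = gmult G w u g - gmult G w v g"
  by (cases "g \<in> carrier G") (simp_all add: gmult_apply gmult_out sum_subtractf right_diff_distrib)

lemma doeblin:
  assumes sg: "subgroup K G" and z: "z \<in> prob_simplex G" "van K z"
    and dz: "\<And>g. g \<in> K \<Longrightarrow> \<delta> \<le> z g"
    and f: "van K f" "(\<Sum>g\<in>carrier G. f g) = 0"
  shows "l1 G (gmult G f z) \<le> (1 - \<delta> * real (card K)) * l1 G f"
proof -
  define w where "w = (\<lambda>g. z g - \<delta> * real (card K) * cs G K g)"
  have cK: "real (card K) * (1 / real (card K)) = 1" using sg_card[OF sg] by simp
  have wnn: "0 \<le> w g" for g
  proof (cases "g \<in> K")
    case True then show ?thesis using dz[OF True] cK sg_card[OF sg] by (simp add: w_def cs_def)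
  next
    case False then show ?thesis using z(2) by (simp add: w_def cs_def van_def)
  qed
  have "l1 G w = (\<Sum>g\<in>carrier G. w g)" using wnn by (simp add: l1_def)
  also have "\<dots> = (\<Sum>g\<in>carrier G. z g) - \<delta> * real (card K) * (\<Sum>g\<in>carrier G. cs G K g)"
    by (simp add: w_def sum_subtractf sum_distrib_left)
  also have "\<dots> = 1 - \<delta> * real (card K)" using prob_sum[OF z(1)] sum_cs[OF sg] by simp
  finally have lw: "l1 G w = 1 - \<delta> * real (card K)" .
  have eq: "gmult G f z = gmult G f w"
  proof (rule ext)
    fix g
    have "gmult G f z g = gmult G f w g + \<delta> * real (card K) * gmult G f (cs G K) g"
    proof (cases "g \<in> carrier G")
      case True
      have "gmult G f z g = (\<Sum>h\<in>carrier G. f h * w (inv h \<otimes> g) + \<delta> * real (card K) * (f h * cs G K (inv h \<otimes> g)))"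
        unfolding gmult_apply[OF True] by (rule sum.cong[OF refl]) (simp add: w_def algebra_simps)
      also have "\<dots> = gmult G f w g + \<delta> * real (card K) * gmult G f (cs G K) g"
        by (simp add: gmult_apply True sum.distrib sum_distrib_left)
      finally show ?thesis .
    qed (simp add: gmult_out)
    also have "gmult G f (cs G K) g = 0" using cs_right[OF sg f(1)] f(2) by simp
    finally show "gmult G f z g = gmult G f w g" by simp
  qed
  have "l1 G (gmult G f z) \<le> l1 G f * l1 G w" unfolding eq by (rule l1_gmult)
  then show ?thesis using lw by (simp add: mult.commute)
qed

lemma conv_main:
  assumes sg: "subgroup K G" and y: "y \<in> prob_simplex G" "van K y"
    and y1: "0 < y \<one>" and gen: "K \<subseteq> generate G (supp G y)"
  shows "(\<lambda>p. l1 G (\<lambda>g. gpow G y p g - cs G K g)) \<longlonglongrightarrow> 0"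
proof -
  define P where "P k = {g \<in> carrier G. 0 < gpow G y k g}" for k
  have yg: "y \<in> galg G" using y(1) by (rule prob_galg)
  have pnn: "0 \<le> gpow G y k g" for k g using gpow_prob[OF y(1)] by (rule prob_nonneg)
  have Pmul: "g \<otimes> h \<in> P (i + j)" if g: "g \<in> P i" and h: "h \<in> P j" for g h i j
  proof -
    have gC: "g \<in> carrier G" and hC: "h \<in> carrier G" using g h by (auto simp: P_def)
    have "0 < gpow G y i g * gpow G y j (inv g \<otimes> (g \<otimes> h))"
      using g h gC hC by (simp add: P_def m_assoc[symmetric])
    also have "\<dots> \<le> gmult G (gpow G y i) (gpow G y j) (g \<otimes> h)"
      by (rule gmult_ge_term) (simp_all add: pnn gC hC)
    also have "\<dots> = gpow G y (i + j) (g \<otimes> h)" by (simp add: gpow_add[OF yg])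
    finally show ?thesis using gC hC by (simp add: P_def)
  qed
  have P0: "\<one> \<in> P 0" by (simp add: P_def gunit_def)
  have P1: "g \<in> P 1" if "g \<in> supp G y" for g
    using that pnn[of 1 g] by (auto simp: P_def supp_def gunit_left[OF yg])
  have one_supp: "\<one> \<in> supp G y" using y1 by (simp add: supp_def)
  have one_P: "\<one> \<in> P k" for k
  proof (induction k)
    case 0 show ?case by (rule P0)
  next
    case (Suc k)
    have "\<one> \<otimes> \<one> \<in> P (k + 1)" by (rule Pmul[OF Suc P1[OF one_supp]])
    then show ?case by simp
  qed
  have Pmono: "P i \<subseteq> P j" if "i \<le> j" for i j
  proof
    fix g assume g: "g \<in> P i"
    then have "g \<in> carrier G" by (simp add: P_def)
    moreover have "g \<otimes> \<one> \<in> P (i + (j - i))" by (rule Pmul[OF g one_P])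
    ultimately show "g \<in> P j" using that by simp
  qed
  have Ppow: "g [^] q \<in> P (k * q)" if g: "g \<in> P k" for g k q
  proof (induction q)
    case 0 then show ?case using P0 by simp
  next
    case (Suc q)
    have "g [^] q \<otimes> g \<in> P (k * q + k)" by (rule Pmul[OF Suc g])
    then show ?case by (simp add: add.commute)
  qed
  have gen_P: "\<exists>k. h \<in> P k" if "h \<in> generate G (supp G y)" for h
    using that
  proof (induction rule: generate.induct)
    case one then show ?case using P0 by blast
  next
    case (incl h) then show ?case using P1 by blast
  next
    case (inv h)
    have hC: "h \<in> carrier G" using inv by (simp add: supp_def)
    have o1: "ord h \<ge> 1" by (rule ord_ge_1[OF fin hC])
    have "h [^] (ord h - 1) \<otimes> h = h [^] (Suc (ord h - 1))" by simp
    also have "\<dots> = \<one>" using o1 hC by simp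
    finally have "inv h = h [^] (ord h - 1)"
      by (rule inv_equality) (simp_all add: hC)
    moreover have "h [^] (ord h - 1) \<in> P (1 * (ord h - 1))" by (rule Ppow[OF P1[OF inv]])
    ultimately show ?case by auto
  next
    case (eng h1 h2) then show ?case using Pmul by blast
  qed
  have finK: "finite K" using sg_sub[OF sg] fin finite_subset by blast
  have oneK: "\<one> \<in> K" using sg by (rule subgroup.one_closed)
  obtain kf where kf: "\<forall>g\<in>K. g \<in> P (kf g)"
    using gen gen_P by (metis subsetD)
  define k0 where "k0 = Suc (\<Sum>g\<in>K. kf g)"
  have K_P: "g \<in> P k0" if "g \<in> K" for g
  proof -
    have "kf g \<le> (\<Sum>g\<in>K. kf g)" by (rule member_le_sum[OF that _ finK]) simp
    then have "kf g \<le> k0" by (simp add: k0_def)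
    then show ?thesis using Pmono kf that by blast
  qed
  have k0pos: "0 < k0" by (simp add: k0_def)
  define Y where "Y = gpow G y k0"
  have Yprob: "Y \<in> prob_simplex G" unfolding Y_def by (rule gpow_prob[OF y(1)])
  have Yvan: "van K Y" unfolding Y_def by (rule van_gpow[OF sg y(2)])
  define \<delta> where "\<delta> = Min (Y ` K)"
  have \<delta>pos: "0 < \<delta>" unfolding \<delta>_def using finK oneK K_P
    by (subst Min_gr_iff) (auto simp: P_def Y_def)
  have \<delta>le: "\<delta> \<le> Y g" if "g \<in> K" for g unfolding \<delta>_def using finK that by simp
  define e where "e p = (\<lambda>g. gpow G y p g - cs G K g)" for p
  have evan: "van K (e p)" for p
    using van_gpow[OF sg y(2), of p] by (simp add: van_def e_def cs_def)
  have esum: "(\<Sum>g\<in>carrier G. e p g) = 0" for p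
    using prob_sum[OF gpow_prob[OF y(1)], of p] sum_cs[OF sg] by (simp add: e_def sum_subtractf)
  have estep: "e (p + q) = gmult G (e p) (gpow G y q)" for p q
  proof (rule ext)
    fix g
    have "gmult G (e p) (gpow G y q) g = gmult G (gpow G y p) (gpow G y q) g - gmult G (cs G K) (gpow G y q) g"
      unfolding e_def by (rule gmult_diff_left)
    also have "gmult G (cs G K) (gpow G y q) = cs G K"
      using cs_left[OF sg van_gpow[OF sg y(2)], of q] prob_sum[OF gpow_prob[OF y(1)], of q] by simp
    finally show "e (p + q) g = gmult G (e p) (gpow G y q) g"
      by (simp add: e_def gpow_add[OF yg])
  qed
  define \<rho> where "\<rho> = 1 - \<delta> * real (card K)"
  have "\<delta> * real (card K) = (\<Sum>g\<in>K. \<delta>)" by simp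
  also have "\<dots> \<le> (\<Sum>g\<in>K. Y g)" by (rule sum_mono) (rule \<delta>le)
  also have "\<dots> = (\<Sum>g\<in>carrier G. Y g)"
    by (rule sum.mono_neutral_right[OF fin sg_sub[OF sg], symmetric]) (use Yvan in \<open>auto simp: van_def\<close>)
  also have "\<dots> = 1" by (rule prob_sum[OF Yprob])
  finally have \<rho>nn: "0 \<le> \<rho>" by (simp add: \<rho>_def)
  have \<rho>lt: "\<rho> < 1" using \<delta>pos sg_card[OF sg] by (simp add: \<rho>_def)
  have dec_k0: "l1 G (e (p + k0)) \<le> \<rho> * l1 G (e p)" for p
    unfolding estep \<rho>_def
    by (rule doeblin[OF sg gpow_prob[OF y(1)] van_gpow[OF sg y(2)] _ evan esum]) (use \<delta>le in \<open>simp add: Y_def\<close>)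
  have dec1: "l1 G (e (Suc p)) \<le> l1 G (e p)" for p
  proof -
    have "l1 G (e (p + 1)) \<le> l1 G (e p) * l1 G (gpow G y 1)"
      unfolding estep by (rule l1_gmult)
    then show ?thesis using l1_prob[OF gpow_prob[OF y(1)], of 1] by simp
  qed
  have decm: "l1 G (e p) \<le> l1 G (e 0)" for p
  proof (induction p)
    case (Suc p) then show ?case using dec1[of p] by linarith
  qed simp
  have bound: "l1 G (e p) \<le> \<rho> ^ (p div k0) * l1 G (e 0)" for p
  proof (induction p rule: less_induct)
    case (less p)
    show ?case
    proof (cases "p < k0")
      case True then show ?thesis using decm[of p] by simp
    next
      case False
      then have pe: "p = (p - k0) + k0" by simp
      have IH: "l1 G (e (p - k0)) \<le> \<rho> ^ ((p - k0) div k0) * l1 G (e 0)"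
        using less k0pos False by simp
      have "l1 G (e p) \<le> \<rho> * l1 G (e (p - k0))" using dec_k0[of "p - k0"] pe by simp
      also have "\<dots> \<le> \<rho> * (\<rho> ^ ((p - k0) div k0) * l1 G (e 0))"
        by (rule mult_left_mono[OF IH \<rho>nn])
      also have "\<dots> = \<rho> ^ (Suc ((p - k0) div k0)) * l1 G (e 0)" by simp
      also have "Suc ((p - k0) div k0) = p div k0" using le_div_geq[OF k0pos, of p] False by simp
      finally show ?thesis .
    qed
  qed
  have lim0: "(\<lambda>p. \<rho> ^ (p div k0)) \<longlonglongrightarrow> 0"
    by (rule filterlim_compose[OF LIMSEQ_power_zero filterlim_at_top_div_const_nat[OF k0pos]])
       (use \<rho>nn \<rho>lt in simp)
  have "(\<lambda>p. \<rho> ^ (p div k0) * l1 G (e 0)) \<longlonglongrightarrow> 0"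
    by (rule tendsto_mult_left_zero[OF lim0])
  then have "(\<lambda>p. l1 G (e p)) \<longlonglongrightarrow> 0"
    by (rule Lim_null_comparison[rotated]) (use bound l1_nonneg in simp)
  then show ?thesis by (simp add: e_def)
qed

lemma l1_to_pointwise:
  assumes "(\<lambda>p. l1 G (\<lambda>g. F p g - L g)) \<longlonglongrightarrow> 0" "\<And>p. F p \<in> galg G" "L \<in> galg G"
  shows "(\<lambda>p. F p g) \<longlonglongrightarrow> L g"
proof (cases "g \<in> carrier G")
  case False then show ?thesis using assms(2,3) by (simp add: galg_out)
next
  case True
  have "(\<lambda>p. F p g - L g) \<longlonglongrightarrow> 0"
  proof (rule Lim_null_comparison[OF _ assms(1)], rule always_eventually, rule allI)
    fix p
    show "norm (F p g - L g) \<le> l1 G (\<lambda>g. F p g - L g)"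
      using abs_le_l1[OF True, of "\<lambda>g. F p g - L g"] by simp
  qed
  then show ?thesis by (rule LIM_zero_cancel)
qed


lemma gmult_tendsto_right:
  assumes "\<And>g. (\<lambda>q. F q g) \<longlonglongrightarrow> L g"
  shows "(\<lambda>q. gmult G u (F q) g) \<longlonglongrightarrow> gmult G u L g"
proof (cases "g \<in> carrier G")
  case True
  show ?thesis unfolding gmult_apply[OF True]
    by (intro tendsto_sum tendsto_mult tendsto_const assms)
qed (simp add: gmult_out)

lemma gmult_tendsto_left:
  assumes "\<And>g. (\<lambda>q. F q g) \<longlonglongrightarrow> L g"
  shows "(\<lambda>q. gmult G (F q) u g) \<longlonglongrightarrow> gmult G L u g"
proof (cases "g \<in> carrier G")
  case True
  show ?thesis unfolding gmult_apply[OF True]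
    by (intro tendsto_sum tendsto_mult tendsto_const assms)
qed (simp add: gmult_out)

end

locale fx = fgrp G for G (structure) +
  fixes x :: "'a \<Rightarrow> real"
  assumes xp: "x \<in> prob_simplex G"
begin

lemma xg: "x \<in> galg G" by (rule prob_galg[OF xp])

lemma pow_lower:
  assumes a: "a \<in> carrier G"
  shows "x a ^ k \<le> gpow G x k (a [^] k)"
proof (induction k)
  case 0 then show ?case by (simp add: gunit_def)
next
  case (Suc k)
  have xa: "0 \<le> x a" by (rule prob_nonneg[OF xp])
  have "x a ^ Suc k = x a ^ k * x a" by simp
  also have "\<dots> \<le> gpow G x k (a [^] k) * x a" by (rule mult_right_mono[OF Suc xa])
  also have "\<dots> = gpow G x k (a [^] k) * x (inv (a [^] k) \<otimes> (a [^] k \<otimes> a))"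
    using a by (simp add: m_assoc[symmetric])
  also have "\<dots> \<le> gmult G (gpow G x k) x (a [^] k \<otimes> a)"
    by (rule gmult_ge_term) (simp_all add: a prob_nonneg[OF gpow_prob[OF xp]] prob_nonneg[OF xp])
  finally show ?case by simp
qed

lemma n_exists: "\<exists>k. k \<ge> 1 \<and> gpow G x k \<one> \<noteq> 0"
proof -
  have "\<exists>a\<in>carrier G. x a \<noteq> 0"
  proof (rule ccontr)
    assume "\<not> ?thesis"
    then have "(\<Sum>g\<in>carrier G. x g) = 0" by simp
    then show False using prob_sum[OF xp] by simp
  qed
  then obtain a where a: "a \<in> carrier G" "x a \<noteq> 0" by blast
  then have xa: "0 < x a" using prob_nonneg[OF xp, of a] by simp
  have "0 < x a ^ ord a" using xa by simp
  also have "\<dots> \<le> gpow G x (ord a) (a [^] ord a)" by (rule pow_lower[OF a(1)])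
  finally have "gpow G x (ord a) \<one> \<noteq> 0" using a by simp
  then show ?thesis using ord_ge_1[OF fin a(1)] by blast
qed

abbreviation "nn \<equiv> n_of G x"
abbreviation "yy \<equiv> gpow G x nn"
abbreviation "KK \<equiv> G_of G x"
abbreviation "cc \<equiv> c_of G x"
abbreviation "MM \<equiv> m_of G x"

lemma nn_props: "nn \<ge> 1" "yy \<one> \<noteq> 0"
  using LeastI_ex[OF n_exists] unfolding n_of_def by auto

lemma yy_prob: "yy \<in> prob_simplex G" by (rule gpow_prob[OF xp])

lemma yy_one: "0 < yy \<one>"
  using nn_props(2) prob_nonneg[OF yy_prob, of \<one>] by simp

lemma supp_sub: "supp G u \<subseteq> carrier G" by (auto simp: supp_def)

lemma KK_sg: "subgroup KK G"
  unfolding G_of_def by (rule generate_is_subgroup[OF supp_sub])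

lemma supp_van: "u \<in> galg G \<Longrightarrow> supp G u \<subseteq> KK \<Longrightarrow> van KK u"
  unfolding van_def supp_def by (auto simp: galg_def)

lemma yy_van: "van KK yy"
  by (rule supp_van[OF prob_galg[OF yy_prob]]) (auto simp: G_of_def intro: generate.incl)

lemma cc_eq: "cc = cs G KK"
  by (simp add: c_of_def cs_def)

lemma cc_galg: "cc \<in> galg G" unfolding cc_eq by (rule cs_galg[OF KK_sg])

lemma yy_conv: "(\<lambda>p. l1 G (\<lambda>g. gpow G yy p g - cc g)) \<longlonglongrightarrow> 0"
  unfolding cc_eq
  by (rule conv_main[OF KK_sg yy_prob yy_van yy_one]) (simp add: G_of_def)

lemma yy_conv_pt: "(\<lambda>p. gpow G yy p g) \<longlonglongrightarrow> cc g"
  by (rule l1_to_pointwise[OF yy_conv gpow_galg[OF prob_galg[OF yy_prob]] cc_galg])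

lemma MM_exists: "\<exists>k. k \<ge> 1 \<and> supp G (gpow G x k) \<subseteq> KK"
  using nn_props(1) by (auto simp: G_of_def intro: generate.incl)

lemma MM_props: "MM \<ge> 1" "supp G (gpow G x MM) \<subseteq> KK"
  using LeastI_ex[OF MM_exists] unfolding m_of_def by auto

lemma MM_min: "1 \<le> k \<Longrightarrow> k < MM \<Longrightarrow> \<not> supp G (gpow G x k) \<subseteq> KK"
  unfolding m_of_def using not_less_Least by blast

lemma cc_absorb: "z \<in> prob_simplex G \<Longrightarrow> van KK z \<Longrightarrow> gmult G cc z = cc"
  unfolding cc_eq using cs_left[OF KK_sg] prob_sum by simp

lemma cc_absorb_r: "z \<in> prob_simplex G \<Longrightarrow> van KK z \<Longrightarrow> gmult G z cc = cc"
  unfolding cc_eq using cs_right[OF KK_sg] prob_sum by simp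

lemma cc_MM: "gmult G cc (gpow G x MM) = cc"
  by (rule cc_absorb[OF gpow_prob[OF xp] supp_van[OF gpow_galg[OF xg] MM_props(2)]])

lemma cc_MMq: "gmult G cc (gpow G x (MM * q)) = cc"
proof (induction q)
  case 0 then show ?case using cc_galg by (simp add: gunit_right)
next
  case (Suc q)
  have "gpow G x (MM * Suc q) = gmult G (gpow G x (MM * q)) (gpow G x MM)"
    using gpow_add[OF xg, of "MM * q" MM] by (simp add: add.commute)
  then show ?case using Suc cc_MM by (simp add: gmult_assoc[symmetric])
qed

lemma cc_mod: "gmult G cc (gpow G x N) = gmult G cc (gpow G x (N mod MM))"
proof -
  have "gpow G x N = gpow G x (MM * (N div MM) + N mod MM)" by simp
  also have "\<dots> = gmult G (gpow G x (MM * (N div MM))) (gpow G x (N mod MM))"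
    by (rule gpow_add[OF xg])
  finally show ?thesis using cc_MMq by (simp add: gmult_assoc[symmetric])
qed

lemma main_conv:
  "(\<lambda>N. l1 G (\<lambda>g. gpow G x N g - gmult G cc (gpow G x (N mod MM)) g)) \<longlonglongrightarrow> 0"
proof -
  have npos: "0 < nn" using nn_props(1) by simp
  have bnd: "l1 G (\<lambda>g. gpow G x N g - gmult G cc (gpow G x (N mod MM)) g)
      \<le> l1 G (\<lambda>g. gpow G yy (N div nn) g - cc g)" for N
  proof -
    define q where "q = N div nn"
    define s where "s = N mod nn"
    have xN: "gpow G x N = gmult G (gpow G yy q) (gpow G x s)"
    proof -
      have "gpow G x N = gpow G x (nn * q + s)" by (simp add: q_def s_def)
      also have "\<dots> = gmult G (gpow G x (nn * q)) (gpow G x s)" by (rule gpow_add[OF xg])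
      finally show ?thesis by (simp add: gpow_mult[OF xg])
    qed
    have cyq: "gmult G cc (gpow G yy q) = cc"
      by (rule cc_absorb[OF gpow_prob[OF yy_prob] van_gpow[OF KK_sg yy_van]])
    have cN: "gmult G cc (gpow G x (N mod MM)) = gmult G cc (gpow G x s)"
      using cc_mod[of N] xN cyq by (simp add: gmult_assoc[symmetric])
    have eq: "(\<lambda>g. gpow G x N g - gmult G cc (gpow G x (N mod MM)) g)
        = gmult G (\<lambda>g. gpow G yy q g - cc g) (gpow G x s)"
      by (rule ext) (simp add: gmult_diff_left cN xN)
    have "l1 G (gmult G (\<lambda>g. gpow G yy q g - cc g) (gpow G x s))
        \<le> l1 G (\<lambda>g. gpow G yy q g - cc g) * l1 G (gpow G x s)" by (rule l1_gmult)
    then show ?thesis unfolding eq q_def using l1_prob[OF gpow_prob[OF xp]] by simp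
  qed
  have "(\<lambda>N. l1 G (\<lambda>g. gpow G yy (N div nn) g - cc g)) \<longlonglongrightarrow> 0"
    by (rule filterlim_compose[OF yy_conv filterlim_at_top_div_const_nat[OF npos]])
  then show ?thesis
    by (rule Lim_null_comparison[rotated]) (use bnd l1_nonneg in simp)
qed

lemma x_cc_comm: "gmult G x cc = gmult G cc x"
proof (rule ext)
  fix g
  have e1: "gmult G x (gpow G yy q) = gpow G x (Suc (nn * q))" for q
    by (simp only: gpow_Suc'[OF xg] gpow_mult[OF xg])
  have e2: "gmult G (gpow G yy q) x = gpow G x (Suc (nn * q))" for q
    by (simp add: gpow_mult[OF xg])
  have l1: "(\<lambda>q. gmult G x (gpow G yy q) g) \<longlonglongrightarrow> gmult G x cc g"
    by (rule gmult_tendsto_right[OF yy_conv_pt])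
  have l2: "(\<lambda>q. gmult G (gpow G yy q) x g) \<longlonglongrightarrow> gmult G cc x g"
    by (rule gmult_tendsto_left[OF yy_conv_pt])
  show "gmult G x cc g = gmult G cc x g"
    using l1 l2 unfolding e1 e2 by (rule LIMSEQ_unique)
qed

lemma cc_comm: "gmult G cc (gpow G x j) = gmult G (gpow G x j) cc"
proof (induction j)
  case 0 then show ?case using cc_galg by (simp add: gunit_left gunit_right)
next
  case (Suc j)
  have "gmult G cc (gpow G x (Suc j)) = gmult G (gmult G cc (gpow G x j)) x"
    by (simp add: gmult_assoc)
  also have "\<dots> = gmult G (gpow G x j) (gmult G cc x)" by (simp add: Suc gmult_assoc)
  also have "\<dots> = gmult G (gpow G x (Suc j)) cc" by (simp add: x_cc_comm[symmetric] gmult_assoc)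
  finally show ?case .
qed

lemma cc_distinct:
  assumes ij: "i < j" "j < MM"
  shows "gmult G cc (gpow G x i) \<noteq> gmult G cc (gpow G x j)"
proof
  assume eq: "gmult G cc (gpow G x i) = gmult G cc (gpow G x j)"
  define k where "k = j - i"
  have k: "1 \<le> k" "k < MM" using ij by (auto simp: k_def)
  have "gmult G (gmult G cc (gpow G x i)) (gpow G x (MM - i)) = gmult G cc (gpow G x (i + (MM - i)))"
    by (simp add: gmult_assoc gpow_add[OF xg])
  also have "\<dots> = cc" using ij cc_MM by simp
  finally have A: "gmult G (gmult G cc (gpow G x i)) (gpow G x (MM - i)) = cc" .
  have "gmult G (gmult G cc (gpow G x j)) (gpow G x (MM - i)) = gmult G cc (gpow G x (j + (MM - i)))"
    by (simp add: gmult_assoc gpow_add[OF xg])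
  also have "\<dots> = gmult G cc (gpow G x ((j + (MM - i)) mod MM))" by (rule cc_mod)
  also have "(j + (MM - i)) mod MM = k"
  proof -
    have "j + (MM - i) = k + MM * 1" using ij by (simp add: k_def)
    then show ?thesis using k by simp
  qed
  finally have B: "gmult G (gmult G cc (gpow G x j)) (gpow G x (MM - i)) = gmult G cc (gpow G x k)" .
  have ck: "gmult G cc (gpow G x k) = cc" using A B eq by simp
  have "supp G (gpow G x k) \<subseteq> KK"
  proof
    fix g assume g: "g \<in> supp G (gpow G x k)"
    then have gC: "g \<in> carrier G" and nz: "gpow G x k g \<noteq> 0" by (auto simp: supp_def)
    have pos: "0 < gpow G x k g" using nz prob_nonneg[OF gpow_prob[OF xp], of k g] by simp
    have c1: "0 < cc \<one>" unfolding cc_eq cs_def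
      using subgroup.one_closed[OF KK_sg] sg_card[OF KK_sg] by simp
    have "0 < cc \<one> * gpow G x k (inv \<one> \<otimes> g)" using pos c1 gC by simp
    also have "\<dots> \<le> gmult G cc (gpow G x k) g"
      by (rule gmult_ge_term) (simp_all add: gC cc_eq cs_def prob_nonneg[OF gpow_prob[OF xp]])
    finally have "0 < cc g" using ck by simp
    then show "g \<in> KK" by (simp add: c_of_def split: if_splits)
  qed
  then show False using MM_min k by blast
qed

end


locale fxr = fx G x for G (structure) and x +
  fixes r d :: nat and m :: "nat \<Rightarrow> nat" and N0 :: nat
  assumes r: "r > 1" and d: "d \<ge> 1" and minj: "inj_on m {..<d}" and N0: "N0 \<ge> 1"
    and per: "\<And>n. n \<ge> N0 \<Longrightarrow> r ^ n mod MM = m ((n - N0) mod d)"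
begin

definition "Lf i = gmult G cc (gpow G x (m i))"
definition "DD N = (\<lambda>g. gpow G x N g - gmult G cc (gpow G x (N mod MM)) g)"

lemma dpos: "0 < d" using d by simp

lemma m_lt: "i < d \<Longrightarrow> m i < MM"
proof -
  assume i: "i < d"
  have "r ^ (N0 + i) mod MM = m ((N0 + i - N0) mod d)" by (rule per) simp
  then have "m i = r ^ (N0 + i) mod MM" using i by simp
  then show ?thesis using MM_props(1) by simp
qed

lemma per_L: "n \<ge> N0 \<Longrightarrow> gmult G cc (gpow G x (r ^ n mod MM)) = Lf ((n - N0) mod d)"
  by (simp add: per Lf_def)

lemma D_pt:
  assumes tau: "filterlim \<tau> sequentially sequentially"
  shows "(\<lambda>k. DD (r ^ \<tau> k) g) \<longlonglongrightarrow> 0"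
proof (cases "g \<in> carrier G")
  case False
  then have "DD N g = 0" for N
    using galg_out[OF gpow_galg[OF xg] False] by (simp add: DD_def gmult_out)
  then show ?thesis by simp
next
  case True
  have lim: "(\<lambda>k. l1 G (DD (r ^ \<tau> k))) \<longlonglongrightarrow> 0"
    unfolding DD_def
    by (rule filterlim_compose[OF main_conv filterlim_compose[OF pow_filterlim[OF r] tau]])
  show ?thesis
  proof (rule Lim_null_comparison[OF _ lim], rule always_eventually, rule allI)
    fix k show "norm (DD (r ^ \<tau> k) g) \<le> l1 G (DD (r ^ \<tau> k))"
      using abs_le_l1[OF True] by simp
  qed
qed

lemma Lf_inj: "inj_on Lf {..<d}"
proof (rule inj_onI)
  fix i j assume i: "i \<in> {..<d}" and j: "j \<in> {..<d}" and eq: "Lf i = Lf j"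
  have id: "i < d" and jd: "j < d" using i j by auto
  have "m i = m j"
  proof (rule ccontr)
    assume ne: "m i \<noteq> m j"
    show False
    proof (cases "m i < m j")
      case True
      then show False using cc_distinct[OF True m_lt[OF jd]] eq by (simp add: Lf_def)
    next
      case False
      then have mji: "m j < m i" using ne by simp
      then show False using cc_distinct[OF mji m_lt[OF id]] eq by (simp add: Lf_def)
    qed
  qed
  then show "i = j" using minj i j by (simp add: inj_on_def)
qed

lemma S_lim_eq: "S_lim G r x = Lf ` {..<d}"
proof
  show "S_lim G r x \<subseteq> Lf ` {..<d}"
  proof
    fix L assume "L \<in> S_lim G r x"
    then obtain \<sigma> :: "nat \<Rightarrow> nat" where sm: "strict_mono \<sigma>"
      and lim: "(\<lambda>n. gpow G x (r ^ (\<sigma> n + 1))) \<longlonglongrightarrow> L"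
      by (auto simp: S_lim_def)
    define \<tau> where "\<tau> k = \<sigma> k + 1" for k
    have smt: "strict_mono \<tau>" using sm by (auto simp: \<tau>_def strict_mono_def)
    have ft: "filterlim \<tau> sequentially sequentially" by (rule filterlim_subseq[OF smt])
    define Q where "Q k = gmult G cc (gpow G x (r ^ \<tau> k mod MM))" for k
    have conv: "(\<lambda>k. Q k g) \<longlonglongrightarrow> L g" for g
    proof -
      have a1: "(\<lambda>k. gpow G x (r ^ \<tau> k) g) \<longlonglongrightarrow> L g"
        using tendsto_fun_pointwiseD[OF lim, of g] by (simp add: \<tau>_def)
      have "(\<lambda>k. gpow G x (r ^ \<tau> k) g - DD (r ^ \<tau> k) g) \<longlonglongrightarrow> L g - 0"
        by (rule tendsto_diff[OF a1 D_pt[OF ft]])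
      then show ?thesis by (simp add: DD_def Q_def)
    qed
    have ev: "eventually (\<lambda>k. Q k \<in> Lf ` {..<d}) sequentially"
    proof (rule eventually_sequentiallyI[of N0])
      fix k assume k: "N0 \<le> k"
      have "k \<le> \<sigma> k" by (rule seq_suble[OF sm])
      then have "N0 \<le> \<tau> k" using k by (simp add: \<tau>_def)
      then have "Q k = Lf ((\<tau> k - N0) mod d)" by (simp add: Q_def per_L)
      then show "Q k \<in> Lf ` {..<d}" using dpos by auto
    qed
    show "L \<in> Lf ` {..<d}" by (rule finite_limit[OF conv ev]) simp
  qed
next
  show "Lf ` {..<d} \<subseteq> S_lim G r x"
  proof
    fix L assume "L \<in> Lf ` {..<d}"
    then obtain i where i: "i < d" and L: "L = Lf i" by auto
    define \<sigma> where "\<sigma> k = N0 - 1 + i + k * d" for k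
    have sm: "strict_mono \<sigma>"
    proof (rule strict_monoI)
      fix a b :: nat assume "a < b"
      then have "a * d < b * d" using dpos by simp
      then show "\<sigma> a < \<sigma> b" by (simp add: \<sigma>_def)
    qed
    define \<tau> where "\<tau> k = \<sigma> k + 1" for k
    have smt: "strict_mono \<tau>" using sm by (auto simp: \<tau>_def strict_mono_def)
    have ft: "filterlim \<tau> sequentially sequentially" by (rule filterlim_subseq[OF smt])
    have tau_eq: "\<tau> k = N0 + (i + k * d)" for k using N0 by (simp add: \<tau>_def \<sigma>_def)
    have QL: "gmult G cc (gpow G x (r ^ \<tau> k mod MM)) = Lf i" for k
    proof -
      have "gmult G cc (gpow G x (r ^ \<tau> k mod MM)) = Lf ((\<tau> k - N0) mod d)"
        by (rule per_L) (simp add: tau_eq)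
      also have "(\<tau> k - N0) mod d = i" using i by (simp add: tau_eq)
      finally show ?thesis .
    qed
    have "(\<lambda>k. gpow G x (r ^ (\<sigma> k + 1))) \<longlonglongrightarrow> Lf i"
    proof (rule tendsto_fun_pointwise)
      fix g
      have "(\<lambda>k. DD (r ^ \<tau> k) g + Lf i g) \<longlonglongrightarrow> 0 + Lf i g"
        by (rule tendsto_add[OF D_pt[OF ft] tendsto_const])
      moreover have "DD (r ^ \<tau> k) g + Lf i g = gpow G x (r ^ (\<sigma> k + 1)) g" for k
        using QL[of k] by (simp add: DD_def \<tau>_def)
      ultimately show "(\<lambda>k. gpow G x (r ^ (\<sigma> k + 1)) g) \<longlonglongrightarrow> Lf i g" by simp
    qed
    then show "L \<in> S_lim G r x" using sm L by (auto simp: S_lim_def)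
  qed
qed

lemma set_eq1: "{gmult G (c_of G x) (gpow G x (m i)) | i. i < d} = Lf ` {..<d}"
  by (auto simp: Lf_def)

lemma set_eq2: "{gmult G (gpow G x (m i)) (c_of G x) | i. i < d} = Lf ` {..<d}"
  by (auto simp: Lf_def cc_comm)

lemma card_S: "card (S_lim G r x) = d"
  unfolding S_lim_eq by (simp add: card_image[OF Lf_inj])

lemma d1_iff: "d = 1 \<longleftrightarrow> (\<exists>k\<ge>1. MM dvd r ^ k * (r - 1))"
proof
  assume d1: "d = 1"
  have a: "r ^ N0 mod MM = m 0" using per[of N0] d1 by simp
  have b: "r ^ (N0 + 1) mod MM = m 0" using per[of "N0 + 1"] d1 by simp
  have le: "r ^ N0 \<le> r ^ (N0 + 1)" using r by simp
  have "MM dvd r ^ (N0 + 1) - r ^ N0" using a b le mod_eq_dvd_iff_nat by metis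
  moreover have "r ^ (N0 + 1) - r ^ N0 = r ^ N0 * (r - 1)" by (simp add: diff_mult_distrib2 mult.commute)
  ultimately show "\<exists>k\<ge>1. MM dvd r ^ k * (r - 1)" using N0 by auto
next
  assume "\<exists>k\<ge>1. MM dvd r ^ k * (r - 1)"
  then obtain k where k: "k \<ge> 1" "MM dvd r ^ k * (r - 1)" by blast
  define n where "n = N0 + k"
  have "r ^ (n + 1) - r ^ n = r ^ n * (r - 1)" by (simp add: diff_mult_distrib2 mult.commute)
  also have "\<dots> = r ^ N0 * (r ^ k * (r - 1))" by (simp add: n_def power_add)
  finally have "MM dvd r ^ (n + 1) - r ^ n" using k(2) by simp
  moreover have "r ^ n \<le> r ^ (n + 1)" using r by simp
  ultimately have eq: "r ^ (n + 1) mod MM = r ^ n mod MM" using mod_eq_dvd_iff_nat by metis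
  have "m ((k + 1) mod d) = m (k mod d)"
    using eq per[of n] per[of "n + 1"] by (simp add: n_def)
  then have "(k + 1) mod d = k mod d" using minj dpos by (simp add: inj_on_def)
  then have "d dvd (k + 1) - k" using mod_eq_dvd_iff_nat[of k "k + 1" d] by simp
  then show "d = 1" by simp
qed

lemma cesaro_part:
  "(\<lambda>n. (\<lambda>g. (\<Sum>i=1..n. gpow G x (r ^ i) g) / real n))
     \<longlonglongrightarrow> (\<lambda>g. (\<Sum>i<d. gmult G (gpow G x (m i)) cc g) / real d)"
proof (rule tendsto_fun_pointwise)
  fix g
  define a where "a i = gpow G x (r ^ i) g" for i
  define b where "b k = Lf ((k - N0) mod d) g" for k
  have abnd: "\<bar>a i\<bar> \<le> 1" for i
  proof -
    have p: "gpow G x (r ^ i) \<in> prob_simplex G" by (rule gpow_prob[OF xp])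
    have nn: "0 \<le> a i" unfolding a_def by (rule prob_nonneg[OF p])
    have "a i \<le> 1"
    proof (cases "g \<in> carrier G")
      case True
      have "a i \<le> (\<Sum>h\<in>carrier G. gpow G x (r ^ i) h)" unfolding a_def
        by (rule member_le_sum[OF True _ fin]) (rule prob_nonneg[OF p])
      then show ?thesis using prob_sum[OF p] by simp
    next
      case False then show ?thesis using galg_out[OF prob_galg[OF p] False] by (simp add: a_def)
    qed
    then show ?thesis using nn by simp
  qed
  have ab: "(\<lambda>k. a k - b k) \<longlonglongrightarrow> 0"
  proof -
    have lim: "(\<lambda>k. DD (r ^ k) g) \<longlonglongrightarrow> 0" by (rule D_pt[where \<tau>="\<lambda>k. k", OF filterlim_ident])
    have ev: "eventually (\<lambda>k. DD (r ^ k) g = a k - b k) sequentially"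
    proof (rule eventually_sequentiallyI[of N0])
      fix k assume "N0 \<le> k"
      then show "DD (r ^ k) g = a k - b k" by (simp add: DD_def a_def b_def per_L)
    qed
    show ?thesis using lim by (simp only: tendsto_cong[OF ev])
  qed
  define S where "S = (\<Sum>j<d. Lf j g)"
  have dnz: "real d \<noteq> 0" using dpos by simp
  have win: "(\<lambda>i. (\<Sum>t<d. a (i + t)) / real d) \<longlonglongrightarrow> S / real d"
  proof -
    have "(\<lambda>i. \<Sum>t<d. a (i + t) - b (i + t)) \<longlonglongrightarrow> 0"
      by (rule tendsto_null_sum) (rule LIMSEQ_ignore_initial_segment[OF ab, simplified])
    then have l0: "(\<lambda>i. ((\<Sum>t<d. a (i + t) - b (i + t)) + S) / real d) \<longlonglongrightarrow> (0 + S) / real d"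
      by (rule tendsto_divide[OF tendsto_add[OF _ tendsto_const] tendsto_const dnz])
    then have l: "(\<lambda>i. ((\<Sum>t<d. a (i + t) - b (i + t)) + S) / real d) \<longlonglongrightarrow> S / real d"
      by (simp only: add_0_left)
    have ev: "eventually (\<lambda>i. ((\<Sum>t<d. a (i + t) - b (i + t)) + S) / real d = (\<Sum>t<d. a (i + t)) / real d) sequentially"
    proof (rule eventually_sequentiallyI[of N0])
      fix i assume i: "N0 \<le> i"
      have "(\<Sum>t<d. b (i + t)) = (\<Sum>t<d. Lf (((i - N0) + t) mod d) g)"
        by (rule sum.cong[OF refl]) (use i in \<open>simp add: b_def\<close>)
      also have "\<dots> = S" unfolding S_def by (rule rotate_sum[OF dpos])
      finally have BS: "(\<Sum>t<d. b (i + t)) = S" .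
      have "(\<Sum>t<d. a (i + t) - b (i + t)) = (\<Sum>t<d. a (i + t)) - (\<Sum>t<d. b (i + t))"
        by (rule sum_subtractf)
      then show "((\<Sum>t<d. a (i + t) - b (i + t)) + S) / real d = (\<Sum>t<d. a (i + t)) / real d"
        by (simp only: BS diff_add_cancel)
    qed
    show ?thesis using l by (simp only: tendsto_cong[OF ev])
  qed
  have "(\<lambda>n. (\<Sum>i=1..n. a i) / real n) \<longlonglongrightarrow> S / real d"
    by (rule window_cesaro[OF abnd d win])
  moreover have "S = (\<Sum>i<d. gmult G (gpow G x (m i)) cc g)"
    by (simp add: S_def Lf_def cc_comm)
  ultimately show "(\<lambda>n. (\<Sum>i=1..n. gpow G x (r ^ i) g) / real n) \<longlonglongrightarrow> (\<Sum>i<d. gmult G (gpow G x (m i)) cc g) / real d"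
    by (simp only: a_def)
qed

end

theorem theorem1:
  fixes G (structure) and r :: nat and x :: "'a \<Rightarrow> real"
    and d :: nat and m :: "nat \<Rightarrow> nat"
  assumes "group G" and "finite (carrier G)" and "r > 1"
    and "x \<in> prob_simplex G"
    and "d \<ge> 1" and "inj_on m {..<d}"
    and "\<exists>N\<ge>1. \<forall>n\<ge>N. r ^ n mod m_of G x = m ((n - N) mod d)"
  shows "S_lim G r x = {gmult G (c_of G x) (gpow G x (m i)) | i. i < d}
       \<and> S_lim G r x = {gmult G (gpow G x (m i)) (c_of G x) | i. i < d}
       \<and> (card (S_lim G r x) = 1 \<longleftrightarrow> (\<exists>k\<ge>1. m_of G x dvd r ^ k * (r - 1)))
       \<and> ((\<lambda>n. (\<lambda>g. (\<Sum>i=1..n. gpow G x (r ^ i) g) / real n))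
            \<longlonglongrightarrow> (\<lambda>g. (\<Sum>i<d. gmult G (gpow G x (m i)) (c_of G x) g) / real d))"
proof -
  obtain N0 where N0: "N0 \<ge> 1" "\<forall>n\<ge>N0. r ^ n mod m_of G x = m ((n - N0) mod d)"
    using assms(7) by blast
  have "fxr G x r d m N0"
    by (intro fxr.intro fx.intro fgrp.intro)
       (unfold fxr_axioms_def fx_axioms_def fgrp_axioms_def, use assms N0 in auto)
  then interpret fxr G x r d m N0 .
  show ?thesis
    using S_lim_eq set_eq1 set_eq2 card_S d1_iff cesaro_part by simp
qed

end
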